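(* If $q>2$, the collinearity graph $\Gamma$ of $\mathcal X$ has diameter $2$.
   Context: Let $q=2^n$ and let $Q_0\cong Q(4,q)$ be the parabolic quadric generalized quadrangle in $\mathrm{PG}(4,q)$. An elliptic ovoid of $Q_0$ is a set $X=S\cap Q_0$ where $S$ is a $3$-dimensional projective subspace meeting $Q_0$ in an elliptic quadric $Q^-(3,q)$. Two distinct elliptic ovoids meet in one point (then they are called tangent) or in a conic. $\Gamma$ is the graph whose vertices are the elliptic ovoids of $Q_0$, two being adjacent iff they are distinct and tangent. *)

theory Defs
  imports "HOL-Analysis.Analysis"
begin

text \<open>Underlying vector space V(5,q) = 'a^5 over a finite field 'a; PG(4,q) is its
  projective space.  A projective point is represented by the set of nonzero scalar
  multiples of a nonzero vector.\<close>

definition proj_pt :: "'a::field ^ 5 \<Rightarrow> ('a ^ 5) set" where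
  "proj_pt v = {c *s v | c. c \<noteq> 0}"

text \<open>Standard nondegenerate parabolic quadratic form of Q(4,q):
  X0 X1 + X2 X3 + X4^2.\<close>

definition Qform :: "'a::field ^ 5 \<Rightarrow> 'a" where
  "Qform x = x$0 * x$1 + x$2 * x$3 + x$4 * x$4"

definition Q0_points :: "('a::field ^ 5) set set" where
  "Q0_points = {proj_pt v | v. v \<noteq> 0 \<and> Qform v = 0}"

text \<open>A 3-dimensional projective subspace S of PG(4,q) is a 4-dimensional vector
  subspace W of 'a^5.  S meets Q_0 in an elliptic quadric Q^-(3,q) iff the restriction
  of the quadratic form to W is, in a suitable basis e0,..,e3 of W, of the canonical
  elliptic shape  y0 y1 + g(y2,y3)  with g an anisotropic binary quadratic form.\<close>

definition elliptic_section :: "('a::field ^ 5) set \<Rightarrow> bool" where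
  "elliptic_section W \<longleftrightarrow>
     vec.subspace W \<and> vec.dim W = 4 \<and>
     (\<exists>e :: nat \<Rightarrow> 'a ^ 5. \<exists>b c d :: 'a.
        inj_on e {0..3} \<and> vec.independent (e ` {0..3}) \<and> vec.span (e ` {0..3}) = W \<and>
        (\<forall>y0 y1 y2 y3.
           Qform (y0 *s e 0 + y1 *s e 1 + y2 *s e 2 + y3 *s e 3)
             = y0 * y1 + b * y2 * y2 + c * y2 * y3 + d * y3 * y3) \<and>
        (\<forall>y2 y3. b * y2 * y2 + c * y2 * y3 + d * y3 * y3 = 0 \<longrightarrow> y2 = 0 \<and> y3 = 0))"

definition section_points :: "('a::field ^ 5) set \<Rightarrow> ('a ^ 5) set set" where
  "section_points W = {proj_pt v | v. v \<in> W \<and> v \<noteq> 0 \<and> Qform v = 0}"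

definition elliptic_ovoid :: "('a::field ^ 5) set set \<Rightarrow> bool" where
  "elliptic_ovoid X \<longleftrightarrow> (\<exists>W. elliptic_section W \<and> X = section_points W)"

definition Gamma_adj :: "('a::field ^ 5) set set \<Rightarrow> ('a ^ 5) set set \<Rightarrow> bool" where
  "Gamma_adj X Y \<longleftrightarrow> elliptic_ovoid X \<and> elliptic_ovoid Y \<and> X \<noteq> Y \<and> card (X \<inter> Y) = 1"

definition is_walk :: "'v set \<Rightarrow> ('v \<Rightarrow> 'v \<Rightarrow> bool) \<Rightarrow> 'v list \<Rightarrow> bool" where
  "is_walk V E p \<longleftrightarrow> p \<noteq> [] \<and> set p \<subseteq> V \<and>
     (\<forall>i. Suc i < length p \<longrightarrow> E (p ! i) (p ! Suc i))"

definition graph_dist :: "'v set \<Rightarrow> ('v \<Rightarrow> 'v \<Rightarrow> bool) \<Rightarrow> 'v \<Rightarrow> 'v \<Rightarrow> enat" where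
  "graph_dist V E x y =
     (INF p \<in> {p. is_walk V E p \<and> hd p = x \<and> last p = y}. enat (length p - 1))"

definition graph_diameter :: "'v set \<Rightarrow> ('v \<Rightarrow> 'v \<Rightarrow> bool) \<Rightarrow> enat" where
  "graph_diameter V E = (SUP x \<in> V. SUP y \<in> V. graph_dist V E x y)"

end

theory Submission
  imports Defs
begin

lemma pair_count:
  assumes "finite A" "\<forall>x\<in>A. f x \<in> A \<and> f (f x) = x \<and> f x \<noteq> x"
    "\<forall>x\<in>A. \<forall>y\<in>A. g x = g y \<longleftrightarrow> (y = x \<or> y = f x)"
  shows "card A = 2 * card (g ` A)"
using assms proof (induct "card A" arbitrary: A rule: less_induct)
  case less
  show ?case
  proof (cases "A = {}")
    case True then show ?thesis by simp
  next
    case False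
    then obtain x where x: "x \<in> A" by auto
    define B where "B = A - {x, f x}"
    have fx: "f x \<in> A" "f x \<noteq> x" using less.prems x by auto
    have AB: "A = insert x (insert (f x) B)" using x fx B_def by auto
    have xB: "x \<notin> B" "f x \<notin> B" using B_def by auto
    have fin: "finite B" using less.prems B_def by auto
    have cB: "card A = card B + 2" using AB xB fin fx by simp
    have inv: "\<forall>y\<in>B. f y \<in> B \<and> f (f y) = y \<and> f y \<noteq> y"
    proof
      fix y assume y: "y \<in> B"
      then have yA: "y \<in> A" and yx: "y \<noteq> x" "y \<noteq> f x" using B_def by auto
      have ff: "f (f y) = y" "f y \<in> A" "f y \<noteq> y" using less.prems yA by auto
      have "f y \<noteq> x" using ff yx less.prems x by metis
      moreover have "f y \<noteq> f x" using ff yx less.prems x by metis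
      ultimately show "f y \<in> B \<and> f (f y) = y \<and> f y \<noteq> y" using ff B_def by auto
    qed
    have gB: "\<forall>y\<in>B. \<forall>z\<in>B. g y = g z \<longleftrightarrow> (z = y \<or> z = f y)" using less.prems B_def by auto
    have IH: "card B = 2 * card (g ` B)" using less.hyps[of B] cB fin inv gB by auto
    have gfx: "g (f x) = g x" using less.prems x fx by metis
    have img: "g ` A = insert (g x) (g ` B)" using AB gfx by auto
    have "g x \<notin> g ` B"
    proof
      assume "g x \<in> g ` B"
      then obtain y where "y \<in> B" "g x = g y" by auto
      then show False using less.prems x B_def by auto
    qed
    then have "card (g ` A) = card (g ` B) + 1" using img fin by simp
    then show ?thesis using cB IH by simp
  qed
qed

lemma finUNIV: assumes "CARD('a) = 2^n" shows "finite (UNIV::'a set)"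
  by (rule card_ge_0_finite) (simp add: assms)

lemma char2:
  assumes "CARD('a::field) = 2 ^ n" and "(2::nat) ^ n > 2"
  shows "(1::'a) + 1 = 0"
proof (rule ccontr)
  assume ne: "(1::'a) + 1 \<noteq> 0"
  have fin: "finite (UNIV::'a set)" using finUNIV assms(1) by blast
  define A where "A = (UNIV::'a set) - {0}"
  have neg: "\<forall>x\<in>A. - x \<in> A \<and> - (- x) = x \<and> - x \<noteq> x"
  proof
    fix x assume "x \<in> A"
    then have x0: "x \<noteq> 0" using A_def by auto
    have "-x \<noteq> x"
    proof
      assume "-x = x"
      then have "(1+1) * x = 0" by (simp add: distrib_right)
      then show False using ne x0 by simp
    qed
    then show "- x \<in> A \<and> - (- x) = x \<and> - x \<noteq> x" using A_def x0 by auto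
  qed
  have g: "\<forall>x\<in>A. \<forall>y\<in>A. {x, - x} = {y, - y} \<longleftrightarrow> (y = x \<or> y = - x)" by (auto simp: doubleton_eq_iff)
  have "card A = 2 * card ((\<lambda>x. {x, - x}) ` A)"
    using pair_count[of A uminus "\<lambda>x. {x, - x}"] fin A_def neg g by auto
  moreover have "card A = 2 ^ n - 1" using A_def assms(1) fin by (simp add: card_Diff_singleton)
  moreover have "n \<ge> 1" using assms(2) by (cases n) auto
  moreover obtain j where j: "(2::nat)^n = 2 * j" using \<open>n \<ge> 1\<close> by (metis power_eq_if mult_2 not_one_le_zero)
  moreover have "j \<ge> 1" using j assms(2) by simp
  ultimately show False by presburger
qed

definition HH :: "'a::field set" where "HH = range (\<lambda>t. t * t + t)"

lemma HH_0: "0 \<in> HH" unfolding HH_def by (rule range_eqI[of _ _ 0]) simp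

lemma HH_add: fixes x y :: "'a::field" assumes c2: "(1::'a) + 1 = 0" and "x \<in> HH" "y \<in> HH" shows "x + y \<in> HH"
proof -
  obtain s t where "x = s * s + s" "y = t*t+t" using assms unfolding HH_def by auto
  then have "x + y = (s+t)*(s+t) + (s+t)"
  proof -
    have "s * t + s * t = (1+1)*(s * t)" by (simp add: distrib_right)
    then have "s * t + s * t = 0" using c2 by simp
    then show ?thesis using \<open>x = _\<close> \<open>y = _\<close> by (simp add: algebra_simps)
  qed
  then show ?thesis unfolding HH_def by blast
qed

lemma HH_sq: "t * t + t \<in> HH" unfolding HH_def by blast

lemma c2_dbl: assumes c2: "(1::'a::field) + 1 = 0" shows "(z::'a) + z = 0"
proof -
  have "z + z = (1+1) * z" by (simp add: distrib_right)
  then show ?thesis using c2 by simp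
qed

lemma c2_two: assumes c2: "(1::'a::field) + 1 = 0" shows "(2::'a) = 0"
  using c2 by (simp only: one_add_one)

lemma c2_neg: assumes c2: "(1::'a::field) + 1 = 0" shows "- (z::'a) = z"
proof -
  have "z = - z" using c2_dbl[OF c2, of z] add_eq_0_iff[of z z] by simp
  then show ?thesis by simp
qed

lemma c2_eq: assumes c2: "(1::'a::field) + 1 = 0" shows "((x::'a) + y = 0) = (y = x)"
proof -
  have "(x + y = 0) = (y = - x)" by (rule add_eq_0_iff)
  then show ?thesis using c2_neg[OF c2, of x] by simp
qed

lemma HH_card: assumes c2: "(1::'a::field) + 1 = 0" and fin: "finite (UNIV::'a set)"
  shows "card (UNIV::'a set) = 2 * card (HH::'a set)"
proof -
  have inv: "\<forall>x\<in>(UNIV::'a set). x + 1 \<in> UNIV \<and> (x + 1) + 1 = x \<and> x + 1 \<noteq> x"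
    using c2 by (simp add: add.assoc)
  have g: "\<forall>x\<in>(UNIV::'a set). \<forall>y\<in>UNIV. (x*x+x) = (y*y+y) \<longleftrightarrow> (y = x \<or> y = x + 1)"
  proof (intro ballI)
    fix x y :: 'a
    have ny: "- y = y" by (rule c2_neg[OF c2])
    have "(x*x+x) - (y*y+y) = (x - y) * (x + y + 1)" by (simp add: algebra_simps)
    moreover have "x - y = x + y" using ny by (metis diff_conv_add_uminus)
    ultimately have e: "(x*x+x) - (y*y+y) = (x + y) * (x + y + 1)" by simp
    have "x*x+x = y*y+y \<longleftrightarrow> (x*x+x) - (y*y+y) = 0" by simp
    also have "\<dots> \<longleftrightarrow> x + y = 0 \<or> x + y + 1 = 0" using e by simp
    also have "\<dots> \<longleftrightarrow> y = x \<or> y = x + 1"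
    proof -
      have h: "x + y + 1 = (x + 1) + y" by (simp add: algebra_simps)
      show ?thesis unfolding h using c2_eq[OF c2, of x y] c2_eq[OF c2, of "x+1" y] by (simp only:)
    qed
    finally show "(x*x+x) = (y*y+y) \<longleftrightarrow> (y = x \<or> y = x + 1)" .
  qed
  show ?thesis using pair_count[OF fin inv g] unfolding HH_def by simp
qed

lemma HH_index2: assumes c2: "(1::'a::field) + 1 = 0" and fin: "finite (UNIV::'a set)"
  and a: "(a::'a) \<notin> HH" and b: "(b::'a) \<notin> HH" shows "a + b \<in> HH"
proof -
  have inj: "inj_on (\<lambda>h. a + h) HH" by (auto simp: inj_on_def)
  have disj: "HH \<inter> (\<lambda>h. a + h) ` HH = {}"
  proof (rule ccontr)
    assume "HH \<inter> (\<lambda>h. a + h) ` HH \<noteq> {}"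
    then obtain h where h: "h \<in> HH" "a + h \<in> HH" by auto
    then have "(a + h) + h \<in> HH" using HH_add[OF c2] by blast
    then show False using a c2_dbl[OF c2, of h] by (simp add: add.assoc)
  qed
  have finH: "finite (HH::'a set)" using finite_subset[OF subset_UNIV fin] .
  have c1: "card ((\<lambda>h. a + h) ` HH) = card (HH::'a set)" using card_image[OF inj] .
  have "card (HH \<union> (\<lambda>h. a + h) ` HH) = card (HH::'a set) + card ((\<lambda>h. a + h) ` HH)"
    using card_Un_disjoint[OF finH finite_imageI[OF finH] disj] .
  then have "card (HH \<union> (\<lambda>h. a + h) ` HH) = card (UNIV::'a set)" using HH_card[OF c2 fin] c1 by linarith
  then have "HH \<union> (\<lambda>h. a + h) ` HH = UNIV" using fin card_subset_eq[OF fin, of "HH \<union> (\<lambda>h. a + h) ` HH"] by simp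
  then obtain h where "h \<in> HH" "b = a + h" using b by blast
  then have "a + b = (a + a) + h" by (simp only: add.assoc)
  then have "a + b = h" by (simp only: c2_dbl[OF c2] add_0)
  then show ?thesis using \<open>h \<in> HH\<close> by simp
qed

lemma HH_notall: assumes c2: "(1::'a::field) + 1 = 0" and fin: "finite (UNIV::'a set)"
  shows "\<exists>a::'a. a \<notin> HH"
proof (rule ccontr)
  assume "\<not> (\<exists>a::'a. a \<notin> HH)"
  then have "HH = (UNIV::'a set)" by auto
  then have "card (UNIV::'a set) = 0" using HH_card[OF c2 fin] by simp
  then show False using fin by simp
qed

lemma three_elems: assumes "CARD('a::field) = 2 ^ n" and "(2::nat) ^ n > 2"
  shows "\<exists>t::'a. t \<noteq> 0 \<and> t \<noteq> 1"
proof (rule ccontr)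
  assume "\<not> ?thesis"
  then have "(UNIV::'a set) \<subseteq> {0, 1}" by auto
  then have "card (UNIV::'a set) \<le> card {0::'a, 1}" by (intro card_mono) auto
  then have "card (UNIV::'a set) \<le> 2" by simp
  then show False using assms by linarith
qed

lemma exhaust_5: fixes x :: 5 shows "x = 0 \<or> x = 1 \<or> x = 2 \<or> x = 3 \<or> x = 4"
proof (induct x)
  case (of_int z)
  then have "z = 0 \<or> z = 1 \<or> z = 2 \<or> z = 3 \<or> z = 4" by (simp, presburger)
  then show ?case by auto
qed

definition v5 :: "'a \<Rightarrow> 'a \<Rightarrow> 'a \<Rightarrow> 'a \<Rightarrow> 'a \<Rightarrow> 'a::field^5" where
 "v5 x0 x1 x2 x3 x4 = (\<chi> i. if i = 0 then x0 else if i = 1 then x1 else if i = 2 then x2 else if i = 3 then x3 else x4)"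

lemma v5_comp[simp]: "v5 x0 x1 x2 x3 x4 $ 0 = x0" "v5 x0 x1 x2 x3 x4 $ 1 = x1" "v5 x0 x1 x2 x3 x4 $ 2 = x2"
  "v5 x0 x1 x2 x3 x4 $ 3 = x3" "v5 x0 x1 x2 x3 x4 $ 4 = x4"
  by (simp_all add: v5_def)

lemma vec5_eq: "(x::'a^5) = y \<longleftrightarrow> x$0 = y$0 \<and> x$1 = y$1 \<and> x$2 = y$2 \<and> x$3 = y$3 \<and> x$4 = y$4"
proof
  assume "x$0 = y$0 \<and> x$1 = y$1 \<and> x$2 = y$2 \<and> x$3 = y$3 \<and> x$4 = y$4"
  then have "\<forall>i. x$i = y$i" using exhaust_5 by metis
  then show "x = y" by (simp add: vec_eq_iff)
qed simp

definition Bf :: "'a::field^5 \<Rightarrow> 'a^5 \<Rightarrow> 'a" where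
  "Bf x y = x$0 * y$1 + x$1 * y$0 + x$2 * y$3 + x$3 * y$2"
definition dotf :: "'a::field^5 \<Rightarrow> 'a^5 \<Rightarrow> 'a" where
  "dotf a x = a$0 * x$0 + a$1 * x$1 + a$2 * x$2 + a$3 * x$3"
definition qf :: "'a::field^5 \<Rightarrow> 'a" where
  "qf a = a$0 * a$1 + a$2 * a$3"
definition Wa :: "'a::field^5 \<Rightarrow> ('a^5) set" where
  "Wa a = {v. v$4 = dotf a v}"

lemma Qlin: assumes c2: "(1::'a::field) + 1 = 0"
  shows "Qform (l *s u + m *s (v::'a^5)) = l * l * Qform u + m * m * Qform v + l * m * Bf u v"
proof -
  have "Qform (l *s u + m *s (v::'a^5)) = l * l * Qform u + m * m * Qform v + l * m * Bf u v
     + (1 + 1) * (l * m * u$4 * v$4)"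
    by (simp add: Qform_def Bf_def algebra_simps)
  then show ?thesis using c2 by simp
qed

lemma Qscale: "Qform (l *s (v::'a::field^5)) = l * l * Qform v"
  by (simp add: Qform_def algebra_simps)

lemma pp_self: "v \<in> proj_pt v"
  unfolding proj_pt_def by (rule CollectI, rule exI[of _ 1]) simp

lemma pp_eq: assumes "proj_pt v = proj_pt w" shows "\<exists>k. k \<noteq> 0 \<and> v = k *s w"
proof -
  have "v \<in> proj_pt w" using assms pp_self by metis
  then show ?thesis unfolding proj_pt_def by auto
qed

lemma pp_scale: assumes "k \<noteq> 0" shows "proj_pt (k *s w) = proj_pt w"
proof
  show "proj_pt (k *s w) \<subseteq> proj_pt w"
  proof
    fix x assume "x \<in> proj_pt (k *s w)"
    then obtain c where "c \<noteq> 0" "x = c *s (k *s w)" unfolding proj_pt_def by auto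
    then have "x = (c * k) *s w" "c * k \<noteq> 0" using assms by (simp_all add: vector_smult_assoc)
    then show "x \<in> proj_pt w" unfolding proj_pt_def by blast
  qed
  show "proj_pt w \<subseteq> proj_pt (k *s w)"
  proof
    fix x assume "x \<in> proj_pt w"
    then obtain c where "c \<noteq> 0" "x = c *s w" unfolding proj_pt_def by auto
    then have "x = (c / k) *s (k *s w)" "c / k \<noteq> 0" using assms by (simp_all add: vector_smult_assoc)
    then show "x \<in> proj_pt (k *s w)" unfolding proj_pt_def by blast
  qed
qed

lemma card_not1: assumes "x \<in> A" "y \<in> A" "x \<noteq> y" shows "card A \<noteq> 1"
proof
  assume "card A = 1"
  then obtain z where "A = {z}" by (rule card_1_singletonE)
  then show False using assms by auto
qed

lemma nts_alg:
  fixes u0 u1 u2 u3 v0 v1 v2 v3 b c d :: "'a::field"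
  assumes aniso: "\<forall>y2 y3. b * y2 * y2 + c * y2 * y3 + d * y3 * y3 = 0 \<longrightarrow> y2 = 0 \<and> y3 = 0"
  and H: "\<forall>l m. (l * u0 + m * v0) * (l * u1 + m * v1) + b * (l * u2 + m * v2) * (l * u2 + m * v2)
          + c * (l * u2 + m * v2) * (l * u3 + m * v3) + d * (l * u3 + m * v3) * (l * u3 + m * v3) = 0"
  shows "\<exists>l m. (l \<noteq> 0 \<or> m \<noteq> 0) \<and> l * u0 + m * v0 = 0 \<and> l * u1 + m * v1 = 0
          \<and> l * u2 + m * v2 = 0 \<and> l * u3 + m * v3 = 0"
proof -
  have K0: "l * u2 + m * v2 = 0 \<and> l * u3 + m * v3 = 0" if "l * u0 + m * v0 = 0" for l m
  proof -
    have "b * (l * u2 + m * v2) * (l * u2 + m * v2)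
          + c * (l * u2 + m * v2) * (l * u3 + m * v3) + d * (l * u3 + m * v3) * (l * u3 + m * v3) = 0"
      using H[rule_format, of l m] that by simp
    then show ?thesis using aniso by blast
  qed
  have K1: "l * u2 + m * v2 = 0 \<and> l * u3 + m * v3 = 0" if "l * u1 + m * v1 = 0" for l m
  proof -
    have "b * (l * u2 + m * v2) * (l * u2 + m * v2)
          + c * (l * u2 + m * v2) * (l * u3 + m * v3) + d * (l * u3 + m * v3) * (l * u3 + m * v3) = 0"
      using H[rule_format, of l m] that by simp
    then show ?thesis using aniso by blast
  qed
  show ?thesis
  proof (cases "u0 = 0 \<and> v0 = 0")
    case True
    have u: "u2 = 0 \<and> u3 = 0" using K0[of 1 0] True by simp
    have v: "v2 = 0 \<and> v3 = 0" using K0[of 0 1] True by simp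
    show ?thesis
    proof (cases "u1 = 0 \<and> v1 = 0")
      case True2: True
      show ?thesis by (rule exI[of _ 1], rule exI[of _ 0]) (use True True2 u v in simp)
    next
      case False
      show ?thesis by (rule exI[of _ "- v1"], rule exI[of _ u1]) (use True False u v in \<open>auto simp: algebra_simps\<close>)
    qed
  next
    case False
    define l where "l = - v0"
    define m where "m = u0"
    have lm: "l \<noteq> 0 \<or> m \<noteq> 0" using False l_def m_def by auto
    have w0: "l * u0 + m * v0 = 0" by (simp add: l_def m_def algebra_simps)
    then have w23: "l * u2 + m * v2 = 0 \<and> l * u3 + m * v3 = 0" using K0 by blast
    show ?thesis
    proof (cases "l * u1 + m * v1 = 0")
      case True
      then show ?thesis using lm w0 w23 by blast
    next
      case w1: False
      have uv1: "\<not> (u1 = 0 \<and> v1 = 0)" using w1 by auto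
      define l' where "l' = - v1"
      define m' where "m' = u1"
      have lm': "l' \<noteq> 0 \<or> m' \<noteq> 0" using uv1 l'_def m'_def by auto
      have w1': "l' * u1 + m' * v1 = 0" by (simp add: l'_def m'_def algebra_simps)
      then have w23': "l' * u2 + m' * v2 = 0 \<and> l' * u3 + m' * v3 = 0" using K1 by blast
      show ?thesis
      proof (cases "l' * u0 + m' * v0 = 0")
        case True
        then show ?thesis using lm' w1' w23' by blast
      next
        case w0': False
        have s0: "(l + l') * u0 + (m + m') * v0 = l' * u0 + m' * v0" using w0 by (simp add: algebra_simps)
        have s1: "(l + l') * u1 + (m + m') * v1 = l * u1 + m * v1" using w1' by (simp add: algebra_simps)
        have s2: "(l + l') * u2 + (m + m') * v2 = 0" using w23 w23' by (simp add: algebra_simps)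
        have s3: "(l + l') * u3 + (m + m') * v3 = 0" using w23 w23' by (simp add: algebra_simps)
        have "(l' * u0 + m' * v0) * (l * u1 + m * v1) = 0"
          using H[rule_format, of "l + l'" "m + m'"] s0 s1 s2 s3 by simp
        then show ?thesis using w0' w1 by simp
      qed
    qed
  qed
qed

lemma sum4: "(\<Sum>i\<in>{0..3::nat}. f i) = f 0 + f 1 + f 2 + f 3"
proof -
  have "{0..3::nat} = {0,1,2,3}" by auto
  then show ?thesis by (simp add: algebra_simps)
qed

lemma span4:
  assumes inj: "inj_on e {0..3::nat}" and x: "x \<in> vec.span (e ` {0..3})"
  shows "\<exists>y0 y1 y2 y3. x = y0 *s e 0 + y1 *s e 1 + y2 *s e 2 + y3 *s e (3::nat)"
proof -
  have fin: "finite (e ` {0..3::nat})" by simp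
  obtain u where u: "x = (\<Sum>v\<in>e ` {0..3}. u v *s v)" using x vec.span_finite[OF fin] by auto
  have "(\<Sum>v\<in>e ` {0..3}. u v *s v) = (\<Sum>i\<in>{0..3}. u (e i) *s e i)"
    using sum.reindex[OF inj, of "\<lambda>v. u v *s v"] by simp
  then have "x = u (e 0) *s e 0 + u (e 1) *s e 1 + u (e 2) *s e 2 + u (e 3) *s e 3"
    using u sum4[of "\<lambda>i. u (e i) *s e i"] by simp
  then show ?thesis by blast
qed

lemma in_span4:
  shows "y0 *s e 0 + y1 *s e 1 + y2 *s e 2 + y3 *s e (3::nat) \<in> vec.span (e ` {0..3::nat})"
proof -
  have "e i \<in> vec.span (e ` {0..3::nat})" if "i \<le> 3" for i
    by (rule vec.span_base) (use that in auto)
  then show ?thesis by (intro vec.span_add vec.span_scale) auto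
qed

lemma comb_lin: "l *s (u0 *s e0 + u1 *s e1 + u2 *s e2 + u3 *s e3) + m *s (v0 *s e0 + v1 *s e1 + v2 *s e2 + v3 *s (e3::'a::field^5))
  = (l * u0 + m * v0) *s e0 + (l * u1 + m * v1) *s e1 + (l * u2 + m * v2) *s e2 + (l * u3 + m * v3) *s e3"
  by (simp add: vec_eq_iff algebra_simps)

definition ell_data :: "('a::field^5) set \<Rightarrow> (nat \<Rightarrow> 'a^5) \<Rightarrow> 'a \<Rightarrow> 'a \<Rightarrow> 'a \<Rightarrow> bool" where
  "ell_data W e b c d \<longleftrightarrow> inj_on e {0..3} \<and> vec.independent (e ` {0..3}) \<and> vec.span (e ` {0..3}) = W \<and>
        (\<forall>y0 y1 y2 y3.
           Qform (y0 *s e 0 + y1 *s e 1 + y2 *s e 2 + y3 *s e 3)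
             = y0 * y1 + b * y2 * y2 + c * y2 * y3 + d * y3 * y3) \<and>
        (\<forall>y2 y3. b * y2 * y2 + c * y2 * y3 + d * y3 * y3 = 0 \<longrightarrow> y2 = 0 \<and> y3 = 0)"

lemma ell_dataD1: assumes "ell_data W e b c d" shows "inj_on e {0..3}"
  using assms unfolding ell_data_def by (elim conjE)
lemma ell_dataD2: assumes "ell_data W e b c d" shows "vec.independent (e ` {0..3})"
  using assms unfolding ell_data_def by (elim conjE)
lemma ell_dataD3: assumes "ell_data W e b c d" shows "vec.span (e ` {0..3}) = W"
  using assms unfolding ell_data_def by (elim conjE)
lemma ell_dataD4: assumes "ell_data W e b c d" shows "Qform (y0 *s e 0 + y1 *s e 1 + y2 *s e 2 + y3 *s e 3)
             = y0 * y1 + b * y2 * y2 + c * y2 * y3 + d * y3 * y3"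
  using assms unfolding ell_data_def by (elim conjE allE)
lemma ell_dataD5: assumes "ell_data W e b c d" shows "\<forall>y2 y3. b * y2 * y2 + c * y2 * y3 + d * y3 * y3 = 0 \<longrightarrow> y2 = 0 \<and> y3 = 0"
  using assms unfolding ell_data_def by (elim conjE)
lemmas ell_dataD = ell_dataD1 ell_dataD2 ell_dataD3 ell_dataD4 ell_dataD5

lemma ell_obtain: assumes "elliptic_section W" obtains e b c d where "ell_data W e b c d"
  using assms unfolding elliptic_section_def
  apply (elim conjE exE)
  apply (rule that[unfolded ell_data_def])
  apply (intro conjI)
  by assumption+

lemma nts_W:
  assumes c2: "(1::'a::field) + 1 = 0" and ell: "elliptic_section W"
    and uW: "u \<in> W" and vW: "v \<in> W" and Qu: "Qform u = 0" and Qv: "Qform (v::'a^5) = 0" and B: "Bf u v = 0"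
  shows "\<exists>l m. (l \<noteq> 0 \<or> m \<noteq> 0) \<and> l *s u + m *s v = 0"
proof -
  obtain e b c d where D: "ell_data W e b c d" using ell ell_obtain by blast
  note inj = ell_dataD1[OF D] and sp = ell_dataD3[OF D] and F = ell_dataD4[OF D] and an = ell_dataD5[OF D]
  have uS: "u \<in> vec.span (e ` {0..3})" using uW sp by simp
  have vS: "v \<in> vec.span (e ` {0..3})" using vW sp by simp
  obtain u0 u1 u2 u3 where u: "u = u0 *s e 0 + u1 *s e 1 + u2 *s e 2 + u3 *s e 3"
    using span4[OF inj uS] by (elim exE)
  obtain v0 v1 v2 v3 where v: "v = v0 *s e 0 + v1 *s e 1 + v2 *s e 2 + v3 *s e 3"
    using span4[OF inj vS] by (elim exE)
  have H: "\<forall>l m. (l * u0 + m * v0) * (l * u1 + m * v1) + b * (l * u2 + m * v2) * (l * u2 + m * v2)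
          + c * (l * u2 + m * v2) * (l * u3 + m * v3) + d * (l * u3 + m * v3) * (l * u3 + m * v3) = 0"
  proof (intro allI)
    fix l m
    have "Qform (l *s u + m *s v) = 0" using Qlin[OF c2] Qu Qv B by simp
    then show "(l * u0 + m * v0) * (l * u1 + m * v1) + b * (l * u2 + m * v2) * (l * u2 + m * v2)
          + c * (l * u2 + m * v2) * (l * u3 + m * v3) + d * (l * u3 + m * v3) * (l * u3 + m * v3) = 0"
      unfolding u v comb_lin F .
  qed
  obtain l m where lm: "l \<noteq> 0 \<or> m \<noteq> 0" and z: "l * u0 + m * v0 = 0" "l * u1 + m * v1 = 0"
          "l * u2 + m * v2 = 0" "l * u3 + m * v3 = 0"
    using nts_alg[OF an H] by (elim exE conjE)
  have "l *s u + m *s v = 0" unfolding u v comb_lin z by simp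
  then show ?thesis using lm by blast
qed

lemma sqrt_ex: assumes c2: "(1::'a::field) + 1 = 0" and fin: "finite (UNIV::'a set)"
  shows "\<exists>s::'a. s * s = x"
proof -
  have "inj (\<lambda>s::'a. s * s)"
  proof (rule injI)
    fix s t :: 'a assume "s * s = t * t"
    then have "(s + t) * (s + t) = 2 * (t * t) + 2 * (s * t)" by (simp add: algebra_simps)
    then have "(s + t) * (s + t) = 0" using c2_two[OF c2] by simp
    then have "s + t = 0" by simp
    then show "s = t" using c2_eq[OF c2] by simp
  qed
  then have "surj (\<lambda>s::'a. s * s)" using fin finite_UNIV_inj_surj by blast
  then have "\<forall>y::'a. \<exists>s. y = s * s" by (simp add: surj_def)
  then show ?thesis by metis
qed

lemma aniso_c: assumes c2: "(1::'a::field) + 1 = 0" and fin: "finite (UNIV::'a set)"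
  and an: "\<forall>y2 y3. b * y2 * y2 + c * y2 * y3 + d * y3 * y3 = 0 \<longrightarrow> y2 = 0 \<and> y3 = (0::'a)"
  shows "c \<noteq> 0"
proof
  assume c0: "c = 0"
  show False
  proof (cases "b = 0")
    case True
    then show False using an[rule_format, of 1 0] c0 by simp
  next
    case False
    obtain s where s: "s * s = d / b" using sqrt_ex[OF c2 fin] by blast
    have "b * s * s + c * s * 1 + d * 1 * 1 = d + d" using s c0 False by (simp add: mult.assoc)
    also have "\<dots> = 0" by (rule c2_dbl[OF c2])
    finally show False using an[rule_format, of s 1] by simp
  qed
qed

lemma Bf_pol: assumes c2: "(1::'a::field) + 1 = 0" shows "Bf u v = Qform (u + v) - Qform u - Qform (v::'a^5)"
proof -
  have h: "Qform (1 *s u + 1 *s v) = 1 * 1 * Qform u + 1 * 1 * Qform v + 1 * 1 * Bf u v" by (rule Qlin[OF c2])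
  have "(1::'a) *s u = u" "(1::'a) *s v = v" by (simp_all add: vec_eq_iff)
  then have "Qform (u + v) = Qform u + Qform v + Bf u v" using h by simp
  then show ?thesis by (simp add: algebra_simps)
qed

lemma ell_two_points:
  assumes c2: "(1::'a::field) + 1 = 0" and ell: "elliptic_section (W::('a^5) set)"
  shows "\<exists>P1 P2. P1 \<in> section_points W \<and> P2 \<in> section_points W \<and> P1 \<noteq> P2"
proof -
  obtain e b c d where D: "ell_data W e b c d" using ell ell_obtain by blast
  note sp = ell_dataD3[OF D] and F = ell_dataD4[OF D]
  have Q0: "Qform (e 0) = 0" using F[of 1 0 0 0] by simp
  have Q1: "Qform (e 1) = 0" using F[of 0 1 0 0] by simp
  have Q01: "Qform (e 0 + e 1) = 1" using F[of 1 1 0 0] by simp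
  have W0: "e 0 \<in> W" "e 1 \<in> W" using sp vec.span_base by (metis atLeastAtMost_iff image_eqI le0 zero_le_numeral one_le_numeral)+
  have n0: "e 0 \<noteq> 0" using Q01 Q1 by auto
  have n1: "e 1 \<noteq> 0" using Q01 Q0 by auto
  have ne: "proj_pt (e 0) \<noteq> proj_pt (e 1)"
  proof
    assume "proj_pt (e 0) = proj_pt (e 1)"
    then obtain k where "e 0 = k *s e 1" using pp_eq by blast
    then have "e 0 + e 1 = (k + 1) *s e 1" by (simp add: vec_eq_iff algebra_simps)
    then have "Qform (e 0 + e 1) = (k + 1) * (k + 1) * Qform (e 1)" by (simp only: Qscale)
    then have "Qform (e 0 + e 1) = 0" using Q1 by simp
    then show False using Q01 by simp
  qed
  have "proj_pt (e 0) \<in> section_points W" unfolding section_points_def using W0 n0 Q0 by blast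
  moreover have "proj_pt (e 1) \<in> section_points W" unfolding section_points_def using W0 n1 Q1 by blast
  ultimately show ?thesis using ne by blast
qed

lemma Bf_coords:
  assumes c2: "(1::'a::field) + 1 = 0" and D: "ell_data W e b c d"
    and x: "x = y0 *s e 0 + y1 *s e 1 + y2 *s e 2 + y3 *s e (3::nat)"
  shows "Bf x (e 0) = y1" "Bf x (e 1) = y0" "Bf x (e 2) = c * y3" "Bf x (e 3) = (c::'a) * y2"
proof -
  note F = ell_dataD4[OF D]
  have a0: "x + e 0 = (y0 + 1) *s e 0 + y1 *s e 1 + y2 *s e 2 + y3 *s e 3" unfolding x by (simp add: vec_eq_iff algebra_simps)
  have a1: "x + e 1 = y0 *s e 0 + (y1 + 1) *s e 1 + y2 *s e 2 + y3 *s e 3" unfolding x by (simp add: vec_eq_iff algebra_simps)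
  have a2: "x + e 2 = y0 *s e 0 + y1 *s e 1 + (y2 + 1) *s e 2 + y3 *s e 3" unfolding x by (simp add: vec_eq_iff algebra_simps)
  have a3: "x + e 3 = y0 *s e 0 + y1 *s e 1 + y2 *s e 2 + (y3 + 1) *s e 3" unfolding x by (simp add: vec_eq_iff algebra_simps)
  have b0: "e 0 = 1 *s e 0 + 0 *s e 1 + 0 *s e 2 + 0 *s e 3" by (simp add: vec_eq_iff)
  have b1: "e 1 = 0 *s e 0 + 1 *s e 1 + 0 *s e 2 + 0 *s e 3" by (simp add: vec_eq_iff)
  have b2: "e 2 = 0 *s e 0 + 0 *s e 1 + 1 *s e 2 + 0 *s e 3" by (simp add: vec_eq_iff)
  have b3: "e 3 = 0 *s e 0 + 0 *s e 1 + 0 *s e 2 + 1 *s e 3" by (simp add: vec_eq_iff)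
  have two: "(2::'a) = 0" by (rule c2_two[OF c2])
  have Qx: "Qform x = y0 * y1 + b * y2 * y2 + c * y2 * y3 + d * y3 * y3" unfolding x by (rule F)
  have Q0: "Qform (e 0) = 0" using F[of 1 0 0 0] b0 by simp
  have Q1: "Qform (e 1) = 0" using F[of 0 1 0 0] b1 by simp
  have Q2: "Qform (e 2) = b" using F[of 0 0 1 0] b2 by simp
  have Q3: "Qform (e 3) = d" using F[of 0 0 0 1] b3 by simp
  have P0: "Qform (x + e 0) = (y0 + 1) * y1 + b * y2 * y2 + c * y2 * y3 + d * y3 * y3" unfolding a0 by (rule F)
  have P1: "Qform (x + e 1) = y0 * (y1 + 1) + b * y2 * y2 + c * y2 * y3 + d * y3 * y3" unfolding a1 by (rule F)
  have P2: "Qform (x + e 2) = y0 * y1 + b * (y2 + 1) * (y2 + 1) + c * (y2 + 1) * y3 + d * y3 * y3" unfolding a2 by (rule F)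
  have P3: "Qform (x + e 3) = y0 * y1 + b * y2 * y2 + c * y2 * (y3 + 1) + d * (y3 + 1) * (y3 + 1)" unfolding a3 by (rule F)
  show "Bf x (e 0) = y1" unfolding Bf_pol[OF c2] Qx Q0 P0 by (simp add: algebra_simps)
  show "Bf x (e 1) = y0" unfolding Bf_pol[OF c2] Qx Q1 P1 by (simp add: algebra_simps)
  have "Bf x (e 2) = c * y3 + 2 * (b * y2)" unfolding Bf_pol[OF c2] Qx Q2 P2 by (simp add: algebra_simps)
  then show "Bf x (e 2) = c * y3" using two by simp
  have "Bf x (e 3) = c * y2 + 2 * (d * y3)" unfolding Bf_pol[OF c2] Qx Q3 P3 by (simp add: algebra_simps)
  then show "Bf x (e 3) = c * y2" using two by simp
qed

definition NN :: "'a::field^5" where "NN = v5 0 0 0 0 1"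

lemma N_notin:
  assumes c2: "(1::'a::field) + 1 = 0" and fin: "finite (UNIV::'a set)" and ell: "elliptic_section W"
  shows "(NN::'a^5) \<notin> W"
proof
  assume NW: "NN \<in> W"
  obtain e b c d where D: "ell_data W e b c d" using ell ell_obtain by blast
  note inj = ell_dataD1[OF D] and sp = ell_dataD3[OF D] and an = ell_dataD5[OF D]
  have NS: "NN \<in> vec.span (e ` {0..3})" using NW sp by simp
  obtain y0 y1 y2 y3 where y: "NN = y0 *s e 0 + y1 *s e 1 + y2 *s e 2 + y3 *s e 3"
    using span4[OF inj NS] by (elim exE)
  have Bz: "\<And>z. Bf NN z = 0" by (simp add: Bf_def NN_def)
  have cnz: "c \<noteq> 0" by (rule aniso_c[OF c2 fin an])
  have "y1 = 0" using Bf_coords(1)[OF c2 D y] Bz[of "e 0"] by simp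
  moreover have "y0 = 0" using Bf_coords(2)[OF c2 D y] Bz[of "e 1"] by simp
  moreover have "c * y3 = 0" using Bf_coords(3)[OF c2 D y] Bz[of "e 2"] by simp
  then have "y3 = 0" using cnz by simp
  moreover have "c * y2 = 0" using Bf_coords(4)[OF c2 D y] Bz[of "e 3"] by simp
  then have "y2 = 0" using cnz by simp
  ultimately have "(NN::'a^5) = 0" using y by simp
  then show False unfolding NN_def by (simp add: vec5_eq)
qed

lemma dim5: "vec.dim (UNIV :: ('a::field^5) set) = 5"
proof -
  have "vec.dim (UNIV :: ('a::field^5) set) = card (cart_basis :: ('a^5) set)" by simp
  also have "\<dots> = CARD(5)" by (rule card_cart_basis)
  finally show ?thesis by simp
qed

lemma fwd:
  assumes c2: "(1::'a::field) + 1 = 0" and fin: "finite (UNIV::'a set)" and ell: "elliptic_section W"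
  shows "\<exists>a. W = Wa (a::'a^5)"
proof -
  obtain e b c d where D: "ell_data W e b c d" using ell ell_obtain by blast
  note inj = ell_dataD1[OF D] and ind = ell_dataD2[OF D] and sp = ell_dataD3[OF D]
  have Nn: "NN \<notin> vec.span (e ` {0..3})" using N_notin[OF c2 fin ell] sp by simp
  have ind2: "vec.independent (insert NN (e ` {0..3}))" by (rule vec.independent_insertI[OF Nn ind])
  have NE: "NN \<notin> e ` {0..3}" using Nn vec.span_base by blast
  have c4: "card (e ` {0..3::nat}) = 4" using card_image[OF inj] by simp
  have c5: "card (insert NN (e ` {0..3::nat})) = 5" using c4 NE by simp
  have all: "UNIV \<subseteq> vec.span (insert NN (e ` {0..3}))"
    by (rule vec.card_ge_dim_independent[OF subset_UNIV ind2]) (simp only: c5 dim5 order_refl)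
  have dec: "\<exists>k. x - k *s NN \<in> W" for x :: "'a^5"
  proof -
    have "x \<in> vec.span (insert NN (e ` {0..3}))" using all by blast
    then show ?thesis unfolding vec.span_insert sp by simp
  qed
  obtain k0 where k0: "v5 1 0 0 0 0 - k0 *s NN \<in> W" using dec by blast
  obtain k1 where k1: "v5 0 1 0 0 0 - k1 *s NN \<in> W" using dec by blast
  obtain k2 where k2: "v5 0 0 1 0 0 - k2 *s NN \<in> W" using dec by blast
  obtain k3 where k3: "v5 0 0 0 1 0 - k3 *s NN \<in> W" using dec by blast
  define a where "a = v5 (- k0) (- k1) (- k2) (- k3) (0::'a)"
  have subW: "vec.subspace W" using sp vec.subspace_span by metis
  define z where "z = (\<lambda>v::'a^5. v$0 *s (v5 1 0 0 0 0 - k0 *s NN) + v$1 *s (v5 0 1 0 0 0 - k1 *s NN)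
       + v$2 *s (v5 0 0 1 0 0 - k2 *s NN) + v$3 *s (v5 0 0 0 1 0 - k3 *s NN))"
  have zW: "z v \<in> W" for v unfolding z_def
    by (intro vec.subspace_add[OF subW] vec.subspace_scale[OF subW] k0 k1 k2 k3)
  have zd: "v - z v = (v$4 - dotf a v) *s NN" for v
    unfolding z_def a_def NN_def dotf_def by (simp add: vec5_eq algebra_simps)
  show ?thesis
  proof (rule exI[of _ a], rule set_eqI, rule iffI)
    fix v assume vW: "v \<in> W"
    show "v \<in> Wa a"
    proof (rule ccontr)
      assume "v \<notin> Wa a"
      then have t: "v$4 - dotf a v \<noteq> 0" unfolding Wa_def by simp
      have "v - z v \<in> W" using vec.subspace_diff[OF subW vW zW] .
      then have "(1 / (v$4 - dotf a v)) *s (v - z v) \<in> W" using vec.subspace_scale[OF subW] by blast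
      moreover have "(1 / (v$4 - dotf a v)) *s (v - z v) = ((1 / (v$4 - dotf a v)) * (v$4 - dotf a v)) *s NN"
        unfolding zd by (simp only: vector_smult_assoc)
      moreover have "((1 / (v$4 - dotf a v)) * (v$4 - dotf a v)) *s NN = NN" using t by simp
      ultimately show False using N_notin[OF c2 fin ell] by simp
    qed
  next
    fix v assume "v \<in> Wa a"
    then have "v - z v = 0" unfolding zd Wa_def by simp
    then have "v = z v" by simp
    then show "v \<in> W" using zW[of v] by metis
  qed
qed

lemma v5_smult[simp]: "k *s v5 x0 x1 x2 x3 x4 = v5 (k * x0) (k * x1) (k * x2) (k * x3) (k * x4)"
  by (simp add: vec5_eq)
lemma v5_add[simp]: "v5 x0 x1 x2 x3 x4 + v5 z0 z1 z2 z3 z4 = v5 (x0 + z0) (x1 + z1) (x2 + z2) (x3 + z3) (x4 + z4)"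
  by (simp add: vec5_eq)
lemma Qform_v5[simp]: "Qform (v5 x0 x1 x2 x3 x4) = x0 * x1 + x2 * x3 + x4 * x4"
  by (simp add: Qform_def)
lemma Bf_v5[simp]: "Bf (v5 x0 x1 x2 x3 x4) (v5 z0 z1 z2 z3 z4) = x0 * z1 + x1 * z0 + x2 * z3 + x3 * z2"
  by (simp add: Bf_def)
lemma dotf_v5[simp]: "dotf a (v5 x0 x1 x2 x3 x4) = a$0 * x0 + a$1 * x1 + a$2 * x2 + a$3 * x3"
  by (simp add: dotf_def)
lemma Wa_v5[simp]: "v5 x0 x1 x2 x3 x4 \<in> Wa a \<longleftrightarrow> x4 = a$0 * x0 + a$1 * x1 + a$2 * x2 + a$3 * x3"
  by (simp add: Wa_def)

lemma Bf_coordsF: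
  assumes c2: "(1::'a::field) + 1 = 0"
    and F: "\<And>y0 y1 y2 y3. Qform (y0 *s e0 + y1 *s e1 + y2 *s e2 + y3 *s e3)
             = y0 * y1 + b * y2 * y2 + y2 * y3 + d * y3 * (y3::'a)"
    and x: "x = y0 *s e0 + y1 *s e1 + y2 *s e2 + y3 *s (e3::'a^5)"
  shows "Bf x e0 = y1" "Bf x e1 = y0" "Bf x e2 = y3" "Bf x e3 = y2"
proof -
  have a0: "x + e0 = (y0 + 1) *s e0 + y1 *s e1 + y2 *s e2 + y3 *s e3" unfolding x by (simp add: vec_eq_iff algebra_simps)
  have a1: "x + e1 = y0 *s e0 + (y1 + 1) *s e1 + y2 *s e2 + y3 *s e3" unfolding x by (simp add: vec_eq_iff algebra_simps)
  have a2: "x + e2 = y0 *s e0 + y1 *s e1 + (y2 + 1) *s e2 + y3 *s e3" unfolding x by (simp add: vec_eq_iff algebra_simps)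
  have a3: "x + e3 = y0 *s e0 + y1 *s e1 + y2 *s e2 + (y3 + 1) *s e3" unfolding x by (simp add: vec_eq_iff algebra_simps)
  have b0: "e0 = 1 *s e0 + 0 *s e1 + 0 *s e2 + 0 *s e3" by (simp add: vec_eq_iff)
  have b1: "e1 = 0 *s e0 + 1 *s e1 + 0 *s e2 + 0 *s e3" by (simp add: vec_eq_iff)
  have b2: "e2 = 0 *s e0 + 0 *s e1 + 1 *s e2 + 0 *s e3" by (simp add: vec_eq_iff)
  have b3: "e3 = 0 *s e0 + 0 *s e1 + 0 *s e2 + 1 *s e3" by (simp add: vec_eq_iff)
  have two: "(2::'a) = 0" by (rule c2_two[OF c2])
  have Qx: "Qform x = y0 * y1 + b * y2 * y2 + y2 * y3 + d * y3 * y3" unfolding x by (rule F)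
  have Q0: "Qform e0 = 0" using F[of 1 0 0 0] b0 by simp
  have Q1: "Qform e1 = 0" using F[of 0 1 0 0] b1 by simp
  have Q2: "Qform e2 = b" using F[of 0 0 1 0] b2 by simp
  have Q3: "Qform e3 = d" using F[of 0 0 0 1] b3 by simp
  have P0: "Qform (x + e0) = (y0 + 1) * y1 + b * y2 * y2 + y2 * y3 + d * y3 * y3" unfolding a0 by (rule F)
  have P1: "Qform (x + e1) = y0 * (y1 + 1) + b * y2 * y2 + y2 * y3 + d * y3 * y3" unfolding a1 by (rule F)
  have P2: "Qform (x + e2) = y0 * y1 + b * (y2 + 1) * (y2 + 1) + (y2 + 1) * y3 + d * y3 * y3" unfolding a2 by (rule F)
  have P3: "Qform (x + e3) = y0 * y1 + b * y2 * y2 + y2 * (y3 + 1) + d * (y3 + 1) * (y3 + 1)" unfolding a3 by (rule F)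
  show "Bf x e0 = y1" unfolding Bf_pol[OF c2] Qx Q0 P0 by (simp add: algebra_simps)
  show "Bf x e1 = y0" unfolding Bf_pol[OF c2] Qx Q1 P1 by (simp add: algebra_simps)
  have "Bf x e2 = y3 + 2 * (b * y2)" unfolding Bf_pol[OF c2] Qx Q2 P2 by (simp add: algebra_simps)
  then show "Bf x e2 = y3" using two by simp
  have "Bf x e3 = y2 + 2 * (d * y3)" unfolding Bf_pol[OF c2] Qx Q3 P3 by (simp add: algebra_simps)
  then show "Bf x e3 = y2" using two by simp
qed

lemma Bf_zero[simp]: "Bf 0 x = 0" by (simp add: Bf_def)

lemma coeff_indep:
  assumes c2: "(1::'a::field) + 1 = 0"
    and F: "\<And>y0 y1 y2 y3. Qform (y0 *s e0 + y1 *s e1 + y2 *s e2 + y3 *s e3)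
             = y0 * y1 + b * y2 * y2 + y2 * y3 + d * y3 * (y3::'a)"
    and z: "y0 *s e0 + y1 *s e1 + y2 *s e2 + y3 *s (e3::'a^5) = 0"
  shows "y0 = 0 \<and> y1 = 0 \<and> y2 = 0 \<and> y3 = 0"
proof -
  note BC = Bf_coordsF[OF c2 F z[symmetric]]
  show ?thesis using BC by simp
qed

lemma subspace_Wa: "vec.subspace (Wa a)"
  unfolding vec.subspace_def Wa_def dotf_def by (simp add: algebra_simps)

lemma NN_Wa: "NN \<notin> Wa a" unfolding NN_def by simp

lemma aniso_q: assumes c2: "(1::'a::field) + 1 = 0" and bt: "beta \<notin> HH"
  shows "\<forall>y2 y3. beta * y2 * y2 + y2 * y3 + 1 * y3 * (y3::'a) = 0 \<longrightarrow> y2 = 0 \<and> y3 = 0"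
proof (intro allI impI)
  fix y2 y3 :: 'a assume h: "beta * y2 * y2 + y2 * y3 + 1 * y3 * y3 = 0"
  show "y2 = 0 \<and> y3 = 0"
  proof (cases "y2 = 0")
    case True then show ?thesis using h by simp
  next
    case False
    define s where "s = y3 / y2"
    have "beta * y2 * y2 + y2 * y3 + 1 * y3 * y3 = (beta + s + s * s) * (y2 * y2)"
      using False unfolding s_def by (simp add: field_simps)
    then have "beta + s + s * s = 0" using h False by simp
    then have "beta = s * s + s" using c2_eq[OF c2, of beta "s + s * s"] by (simp add: algebra_simps)
    then show ?thesis using bt HH_sq by metis
  qed
qed

definition Fprop :: "'a::field^5 \<Rightarrow> 'a^5 \<Rightarrow> 'a^5 \<Rightarrow> 'a^5 \<Rightarrow> 'a^5 \<Rightarrow> bool" where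
  "Fprop c E0 E1 E2 E3 \<longleftrightarrow> E0 \<in> Wa c \<and> E1 \<in> Wa c \<and> E2 \<in> Wa c \<and> E3 \<in> Wa c \<and>
     (\<forall>y0 y1 y2 y3. Qform (y0 *s E0 + y1 *s E1 + y2 *s E2 + y3 *s E3) = y0 * y1 + qf c * y2 * y2 + y2 * y3 + 1 * y3 * y3)"

lemma Edata1: assumes two: "(2::'a::field) = 0" and nz: "(c::'a^5)$1 \<noteq> 0"
  shows "Fprop c (v5 0 (c$2 / c$1) 1 0 0) (v5 0 (c$3 / c$1) 0 1 0) (v5 (c$1) (c$0) (c$3) (c$2) 0) (v5 0 (1 / c$1) 0 0 1)"
  unfolding Fprop_def qf_def using two nz by (simp add: field_simps)

lemma Edata0: assumes two: "(2::'a::field) = 0" and nz: "(c::'a^5)$0 \<noteq> 0"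
  shows "Fprop c (v5 (c$2 / c$0) 0 1 0 0) (v5 (c$3 / c$0) 0 0 1 0) (v5 (c$1) (c$0) (c$3) (c$2) 0) (v5 (1 / c$0) 0 0 0 1)"
  unfolding Fprop_def qf_def using two nz by (simp add: field_simps)

lemma Edata3: assumes two: "(2::'a::field) = 0" and nz: "(c::'a^5)$3 \<noteq> 0"
  shows "Fprop c (v5 1 0 0 (c$0 / c$3) 0) (v5 0 1 0 (c$1 / c$3) 0) (v5 (c$1) (c$0) (c$3) (c$2) 0) (v5 0 0 0 (1 / c$3) 1)"
  unfolding Fprop_def qf_def using two nz by (simp add: field_simps)

lemma Edata2: assumes two: "(2::'a::field) = 0" and nz: "(c::'a^5)$2 \<noteq> 0"
  shows "Fprop c (v5 1 0 (c$0 / c$2) 0 0) (v5 0 1 (c$1 / c$2) 0 0) (v5 (c$1) (c$0) (c$3) (c$2) 0) (v5 0 0 (1 / c$2) 0 1)"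
  unfolding Fprop_def qf_def using two nz by (simp add: field_simps)

lemma Edata: assumes c2: "(1::'a::field) + 1 = 0" and nz: "(c::'a^5)$0 \<noteq> 0 \<or> c$1 \<noteq> 0 \<or> c$2 \<noteq> 0 \<or> c$3 \<noteq> 0"
  shows "\<exists>E0 E1 E2 E3. Fprop c E0 E1 E2 E3"
  using Edata0[OF c2_two[OF c2]] Edata1[OF c2_two[OF c2]] Edata2[OF c2_two[OF c2]] Edata3[OF c2_two[OF c2]] nz
  by blast

lemma ell_from:
  assumes c2: "(1::'a::field) + 1 = 0" and FP: "Fprop c E0 E1 E2 E3"
    and an: "\<forall>y2 y3. qf c * y2 * y2 + y2 * y3 + 1 * y3 * y3 = 0 \<longrightarrow> y2 = 0 \<and> y3 = (0::'a)"
  shows "elliptic_section (Wa (c::'a^5))"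
proof -
  have inW: "E0 \<in> Wa c" "E1 \<in> Wa c" "E2 \<in> Wa c" "E3 \<in> Wa c" using FP unfolding Fprop_def by blast+
  have F: "\<And>y0 y1 y2 y3. Qform (y0 *s E0 + y1 *s E1 + y2 *s E2 + y3 *s E3) = y0 * y1 + qf c * y2 * y2 + y2 * y3 + 1 * y3 * y3"
    using FP unfolding Fprop_def by blast
  have b0: "E0 = 1 *s E0 + 0 *s E1 + 0 *s E2 + 0 *s E3" by (simp add: vec_eq_iff)
  have b1: "E1 = 0 *s E0 + 1 *s E1 + 0 *s E2 + 0 *s E3" by (simp add: vec_eq_iff)
  have b2: "E2 = 0 *s E0 + 0 *s E1 + 1 *s E2 + 0 *s E3" by (simp add: vec_eq_iff)
  have b3: "E3 = 0 *s E0 + 0 *s E1 + 0 *s E2 + 1 *s E3" by (simp add: vec_eq_iff)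
  note G0 = Bf_coordsF[OF c2 F b0] and G1 = Bf_coordsF[OF c2 F b1]
    and G2 = Bf_coordsF[OF c2 F b2] and G3 = Bf_coordsF[OF c2 F b3]
  have d01: "E0 \<noteq> E1" using G0(2) G1(2) by force
  have d02: "E0 \<noteq> E2" using G0(2) G2(2) by force
  have d03: "E0 \<noteq> E3" using G0(2) G3(2) by force
  have d12: "E1 \<noteq> E2" using G1(1) G2(1) by force
  have d13: "E1 \<noteq> E3" using G1(1) G3(1) by force
  have d23: "E2 \<noteq> E3" using G2(4) G3(4) by force
  define e where "e = (\<lambda>i::nat. if i = 0 then E0 else if i = 1 then E1 else if i = 2 then E2 else E3)"
  have e_simps: "e 0 = E0" "e 1 = E1" "e 2 = E2" "e 3 = E3" unfolding e_def by simp_all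
  have img: "e ` {0..3} = {E0, E1, E2, E3}"
  proof -
    have "{0..3::nat} = {0,1,2,3}" by auto
    then show ?thesis using e_simps by simp
  qed
  have inj: "inj_on e {0..3}"
  proof (rule inj_onI)
    fix i j :: nat assume i: "i \<in> {0..3}" and j: "j \<in> {0..3}" and eq: "e i = e j"
    have "i = 0 \<or> i = 1 \<or> i = 2 \<or> i = 3" using i by auto
    moreover have "j = 0 \<or> j = 1 \<or> j = 2 \<or> j = 3" using j by auto
    ultimately show "i = j" using eq e_simps d01 d02 d03 d12 d13 d23 by fastforce
  qed
  have fin: "finite (e ` {0..3::nat})" by simp
  have ind: "vec.independent (e ` {0..3})"
    unfolding vec.independent_explicit
  proof (intro conjI fin allI impI)
    fix u assume s: "(\<Sum>v\<in>e ` {0..3}. u v *s v) = 0"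
    have "(\<Sum>v\<in>e ` {0..3}. u v *s v) = (\<Sum>i\<in>{0..3}. u (e i) *s e i)"
      using sum.reindex[OF inj, of "\<lambda>v. u v *s v"] by simp
    then have "u E0 *s E0 + u E1 *s E1 + u E2 *s E2 + u E3 *s E3 = 0"
      using s sum4[of "\<lambda>i. u (e i) *s e i"] e_simps by simp
    then have "u E0 = 0 \<and> u E1 = 0 \<and> u E2 = 0 \<and> u E3 = 0" by (rule coeff_indep[OF c2 F])
    then show "\<forall>v\<in>e ` {0..3}. u v = 0" unfolding img by simp
  qed
  have subW: "vec.subspace (Wa c)" by (rule subspace_Wa)
  have spsub: "vec.span (e ` {0..3}) \<subseteq> Wa c"
    by (rule vec.span_minimal[OF _ subW]) (use inW img in simp)
  have sp: "vec.span (e ` {0..3}) = Wa c"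
  proof (rule antisym[OF spsub], rule subsetI, rule ccontr)
    fix v assume vW: "v \<in> Wa c" and vn: "v \<notin> vec.span (e ` {0..3})"
    have i1: "vec.independent (insert v (e ` {0..3}))" by (rule vec.independent_insertI[OF vn ind])
    have sp2: "vec.span (insert v (e ` {0..3})) \<subseteq> Wa c"
      by (rule vec.span_minimal[OF _ subW]) (use inW img vW in simp)
    have Nn: "NN \<notin> vec.span (insert v (e ` {0..3}))" using sp2 NN_Wa by blast
    have i2: "vec.independent (insert NN (insert v (e ` {0..3})))" by (rule vec.independent_insertI[OF Nn i1])
    have c4: "card (e ` {0..3::nat}) = 4" using card_image[OF inj] by simp
    have vE: "v \<notin> e ` {0..3}" using vn vec.span_base[of v "e ` {0..3}"] by blast
    have NE: "NN \<notin> insert v (e ` {0..3})" using Nn vec.span_base[of NN "insert v (e ` {0..3})"] by blast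
    have c6: "card (insert NN (insert v (e ` {0..3::nat}))) = 6" using c4 vE NE by simp
    have "card (insert NN (insert v (e ` {0..3::nat}))) \<le> vec.dim (UNIV::('a^5) set)"
      by (rule vec.independent_card_le_dim[OF subset_UNIV i2])
    then show False using c6 dim5[where 'a='a] by linarith
  qed
  have dim: "vec.dim (Wa c) = 4"
    using vec.dim_span_eq_card_independent[OF ind] sp card_image[OF inj] by simp
  have Fe: "\<forall>y0 y1 y2 y3. Qform (y0 *s e 0 + y1 *s e 1 + y2 *s e 2 + y3 *s e 3) = y0 * y1 + qf c * y2 * y2 + 1 * y2 * y3 + 1 * y3 * y3"
    unfolding e_simps F by simp
  have an': "\<forall>y2 y3. qf c * y2 * y2 + 1 * y2 * y3 + 1 * y3 * y3 = 0 \<longrightarrow> y2 = 0 \<and> y3 = 0"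
  proof (intro allI impI)
    fix y2 y3 :: 'a assume h: "qf c * y2 * y2 + 1 * y2 * y3 + 1 * y3 * y3 = 0"
    have "qf c * y2 * y2 + y2 * y3 + 1 * y3 * y3 = 0" using h by simp
    then show "y2 = 0 \<and> y3 = 0" using an by blast
  qed
  show ?thesis unfolding elliptic_section_def
    apply (intro conjI subW dim)
    apply (rule exI[of _ e], rule exI[of _ "qf c"], rule exI[of _ 1], rule exI[of _ 1])
    using inj ind sp Fe an' by (intro conjI)
qed

lemma converse:
  assumes c2: "(1::'a::field) + 1 = 0" and q: "qf (c::'a^5) \<notin> HH"
  shows "elliptic_section (Wa c)"
proof -
  have nz: "c$0 \<noteq> 0 \<or> c$1 \<noteq> 0 \<or> c$2 \<noteq> 0 \<or> c$3 \<noteq> 0"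
  proof (rule ccontr)
    assume "\<not> ?thesis"
    then have "qf c = 0" unfolding qf_def by simp
    then show False using q HH_0[where 'a='a] by simp
  qed
  obtain E0 E1 E2 E3 where FP: "Fprop c E0 E1 E2 E3" using Edata[OF c2 nz] by blast
  show ?thesis by (rule ell_from[OF c2 FP aniso_q[OF c2 q]])
qed

lemma fwd_qf:
  assumes c2: "(1::'a::field) + 1 = 0" and ell: "elliptic_section (Wa (a::'a^5))"
  shows "qf a \<notin> HH"
proof
  assume "qf a \<in> HH"
  then obtain t where t: "qf a = t * t + t" unfolding HH_def by blast
  show False
  proof (cases "a$0 \<noteq> 0 \<or> a$1 \<noteq> 0 \<or> a$2 \<noteq> 0 \<or> a$3 \<noteq> 0")
    case True
    obtain E0 E1 E2 E3 where FP: "Fprop a E0 E1 E2 E3" using Edata[OF c2 True] by blast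
    have inW: "E0 \<in> Wa a" "E1 \<in> Wa a" "E2 \<in> Wa a" "E3 \<in> Wa a" using FP unfolding Fprop_def by blast+
    have F: "\<And>y0 y1 y2 y3. Qform (y0 *s E0 + y1 *s E1 + y2 *s E2 + y3 *s E3) = y0 * y1 + qf a * y2 * y2 + y2 * y3 + 1 * y3 * y3"
      using FP unfolding Fprop_def by blast
    define v where "v = E2 + t *s E3"
    have vv: "v = 0 *s E0 + 0 *s E1 + 1 *s E2 + t *s E3" unfolding v_def by (simp add: vec_eq_iff)
    have uu: "E0 = 1 *s E0 + 0 *s E1 + 0 *s E2 + 0 *s E3" by (simp add: vec_eq_iff)
    have vW: "v \<in> Wa a" unfolding v_def using inW subspace_Wa
      by (metis vec.subspace_add vec.subspace_scale)
    have Qv: "Qform v = 0"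
    proof -
      have "Qform v = qf a + t + t * t" unfolding vv F by simp
      also have "\<dots> = 2 * (t * t + t)" unfolding t by (simp add: algebra_simps)
      finally show ?thesis using c2_two[OF c2] by simp
    qed
    have Qu: "Qform E0 = 0" using F[of 1 0 0 0] uu by simp
    have Buv: "Bf E0 v = 0" using Bf_coordsF(2)[OF c2 F uu] Bf_coordsF(1)[OF c2 F vv] by (simp add: Bf_def algebra_simps)
    obtain l m where lm: "l \<noteq> 0 \<or> m \<noteq> 0" and z: "l *s E0 + m *s v = 0"
      using nts_W[OF c2 ell inW(1) vW Qu Qv Buv] by blast
    have "l *s E0 + 0 *s E1 + m *s E2 + (m * t) *s E3 = 0" using z unfolding v_def by (simp add: vec_eq_iff algebra_simps)
    then have "l = 0 \<and> m = 0" using coeff_indep[OF c2 F] by blast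
    then show False using lm by simp
  next
    case False
    then have a0: "a$0 = 0" "a$1 = 0" "a$2 = 0" "a$3 = 0" by auto
    have uW: "v5 1 0 0 0 0 \<in> Wa a" and vW: "v5 0 0 1 0 0 \<in> Wa a" using a0 by simp_all
    obtain l m where lm: "l \<noteq> 0 \<or> m \<noteq> 0" and z: "l *s v5 1 0 0 0 0 + m *s v5 0 0 1 0 0 = (0::'a^5)"
      using nts_W[OF c2 ell uW vW] by auto
    then show False by (simp add: vec5_eq)
  qed
qed

lemma dotf_add: "dotf (a + d) v = dotf a v + dotf d v" by (simp add: dotf_def algebra_simps)
lemma qf_add: "qf (x + y) = qf x + qf y + Bf x y" by (simp add: qf_def Bf_def algebra_simps)
lemma Bf_add1: "Bf (x + y) z = Bf x z + Bf y z" by (simp add: Bf_def algebra_simps)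
lemma Bf_sym: "Bf x y = Bf y x" by (simp add: Bf_def algebra_simps)
lemma Bf_self: "Bf x x = 2 * qf x" by (simp add: Bf_def qf_def algebra_simps)
lemma Bf_scale2: "Bf x (k *s y) = k * Bf x y" by (simp add: Bf_def algebra_simps)
lemma qf_scale: "qf (k *s y) = k * k * qf y" by (simp add: qf_def algebra_simps)

lemma Wa_scale: "v \<in> Wa a \<Longrightarrow> k *s v \<in> Wa a"
  using vec.subspace_scale[OF subspace_Wa] by blast

lemma tangency:
  assumes c2: "(1::'a::field) + 1 = 0" and ell: "elliptic_section (Wa (a::'a^5))"
    and dnz: "d$0 \<noteq> 0 \<or> d$1 \<noteq> 0 \<or> d$2 \<noteq> 0 \<or> d$3 \<noteq> 0"
    and tq: "qf d = Bf a d * Bf a d"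
  shows "section_points (Wa a) \<inter> section_points (Wa (a + d)) = {proj_pt (v5 (d$1) (d$0) (d$3) (d$2) (Bf a d))}"
proof -
  define P where "P = v5 (d$1) (d$0) (d$3) (d$2) (Bf a d)"
  have two: "(2::'a) = 0" by (rule c2_two[OF c2])
  have Pa: "P \<in> Wa a" unfolding P_def by (simp add: Bf_def algebra_simps)
  have dP: "dotf d P = 0" unfolding P_def using two by (simp add: algebra_simps)
  have Pc: "P \<in> Wa (a + d)" using Pa dP unfolding Wa_def by (simp add: dotf_add)
  have QP: "Qform P = 0"
  proof -
    have "Qform P = qf d + Bf a d * Bf a d" unfolding P_def by (simp add: qf_def algebra_simps)
    also have "\<dots> = 2 * qf d" using tq by simp
    finally show ?thesis using two by simp
  qed
  have P0: "P \<noteq> 0" using dnz unfolding P_def by (auto simp: vec5_eq)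
  have sub: "section_points (Wa a) \<inter> section_points (Wa (a + d)) \<subseteq> {proj_pt P}"
  proof
    fix X assume X: "X \<in> section_points (Wa a) \<inter> section_points (Wa (a + d))"
    obtain v1 where v1: "X = proj_pt v1" "v1 \<in> Wa a" "v1 \<noteq> 0" "Qform v1 = 0"
      using X unfolding section_points_def by blast
    obtain v2 where v2: "X = proj_pt v2" "v2 \<in> Wa (a + d)"
      using X unfolding section_points_def by blast
    obtain k where k: "v1 = k *s v2" using pp_eq v1(1) v2(1) by metis
    have v1c: "v1 \<in> Wa (a + d)" using k v2(2) Wa_scale by simp
    have "dotf d v1 = 0" using v1(2) v1c unfolding Wa_def by (simp add: dotf_add)
    then have B: "Bf v1 P = 0" unfolding P_def by (simp add: Bf_def dotf_def algebra_simps)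
    obtain l m where lm: "l \<noteq> 0 \<or> m \<noteq> 0" and z: "l *s v1 + m *s P = 0"
      using nts_W[OF c2 ell v1(2) Pa v1(4) QP B] by blast
    have l0: "l \<noteq> 0"
    proof
      assume "l = 0"
      then have "m *s P = 0" "m \<noteq> 0" using z lm by simp_all
      then show False using P0 by (simp add: vec_eq_iff)
    qed
    have m0: "m \<noteq> 0"
    proof
      assume "m = 0"
      then have "l *s v1 = 0" using z by simp
      then show False using l0 v1(3) by (simp add: vec_eq_iff)
    qed
    have v1P: "v1 = (- m / l) *s P"
    proof -
      have "l *s v1 = - (m *s P)" using z by (simp add: eq_neg_iff_add_eq_0)
      then have "(1 / l) *s (l *s v1) = (1 / l) *s (- (m *s P))" by simp
      then show ?thesis using l0 by (simp add: vec_eq_iff field_simps)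
    qed
    have "proj_pt v1 = proj_pt P" unfolding v1P by (rule pp_scale) (simp add: l0 m0)
    then show "X \<in> {proj_pt P}" using v1(1) by simp
  qed
  have "proj_pt P \<in> section_points (Wa a)" unfolding section_points_def using Pa P0 QP by blast
  moreover have "proj_pt P \<in> section_points (Wa (a + d))" unfolding section_points_def using Pc P0 QP by blast
  ultimately show ?thesis using sub unfolding P_def by blast
qed

lemma dotf_comb: "dotf u (y0 *s e0 + y1 *s e1 + y2 *s e2 + y3 *s e3) = y0 * dotf u e0 + y1 * dotf u e1 + y2 * dotf u e2 + y3 * dotf u e3"
  by (simp add: dotf_def algebra_simps)

lemma ovoid_point:
  assumes c2: "(1::'a::field) + 1 = 0" and ell: "elliptic_section (Wa (a::'a^5))"
    and unz: "u$0 \<noteq> 0 \<or> u$1 \<noteq> 0 \<or> u$2 \<noteq> 0 \<or> u$3 \<noteq> 0"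
  shows "\<exists>z. z \<in> Wa a \<and> Qform z = 0 \<and> dotf u z \<noteq> 0"
proof (rule ccontr)
  assume nz: "\<not> ?thesis"
  obtain e b c d where D: "ell_data (Wa a) e b c d" using ell ell_obtain by blast
  note inj = ell_dataD1[OF D] and sp = ell_dataD3[OF D] and F = ell_dataD4[OF D]
  have W: "y0 *s e 0 + y1 *s e 1 + y2 *s e 2 + y3 *s e 3 \<in> Wa a" for y0 y1 y2 y3
    using in_span4[of y0 e y1 y2 y3] sp by simp
  have zero: "Qform (y0 *s e 0 + y1 *s e 1 + y2 *s e 2 + y3 *s e 3) = 0 \<Longrightarrow>
       dotf u (y0 *s e 0 + y1 *s e 1 + y2 *s e 2 + y3 *s e 3) = 0" for y0 y1 y2 y3
    using nz W by blast
  have z0: "dotf u (e 0) = 0" using zero[of 1 0 0 0] unfolding F dotf_comb by simp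
  have z1: "dotf u (e 1) = 0" using zero[of 0 1 0 0] unfolding F dotf_comb by simp
  have z2: "dotf u (e 2) = 0" using zero[of "- b" 1 1 0] unfolding F dotf_comb using z0 z1 by simp
  have z3: "dotf u (e 3) = 0" using zero[of "- d" 1 0 1] unfolding F dotf_comb using z0 z1 by simp
  have all: "dotf u v = 0" if "v \<in> Wa a" for v
  proof -
    have vs: "v \<in> vec.span (e ` {0..3})" using that sp by simp
    obtain y0 y1 y2 y3 where "v = y0 *s e 0 + y1 *s e 1 + y2 *s e 2 + y3 *s e 3"
      using span4[OF inj vs] by (elim exE)
    then show ?thesis using z0 z1 z2 z3 by (simp add: dotf_comb)
  qed
  have "u$0 = 0" using all[of "v5 1 0 0 0 (a$0)"] by simp
  moreover have "u$1 = 0" using all[of "v5 0 1 0 0 (a$1)"] by simp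
  moreover have "u$2 = 0" using all[of "v5 0 0 1 0 (a$2)"] by simp
  moreover have "u$3 = 0" using all[of "v5 0 0 0 1 (a$3)"] by simp
  ultimately show False using unz by simp
qed

lemma Bf_add2: "Bf x (y + z) = Bf x y + Bf x z" by (simp add: Bf_def algebra_simps)

lemma common_nb:
  assumes c2: "(1::'a::field) + 1 = 0" and fin: "finite (UNIV::'a set)"
    and qa: "qf (a::'a^5) \<notin> HH" and qb: "qf (b::'a^5) \<notin> HH"
    and ne: "(a + b)$0 \<noteq> 0 \<or> (a + b)$1 \<noteq> 0 \<or> (a + b)$2 \<noteq> 0 \<or> (a + b)$3 \<noteq> 0"
  shows "\<exists>c. qf c \<notin> HH \<and> card (section_points (Wa a) \<inter> section_points (Wa c)) = 1
            \<and> card (section_points (Wa b) \<inter> section_points (Wa c)) = 1"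
proof -
  have two: "(2::'a) = 0" by (rule c2_two[OF c2])
  have ella: "elliptic_section (Wa a)" by (rule converse[OF c2 qa])
  have ellb: "elliptic_section (Wa b)" by (rule converse[OF c2 qb])
  define u where "u = a + b"
  have une: "u$0 \<noteq> 0 \<or> u$1 \<noteq> 0 \<or> u$2 \<noteq> 0 \<or> u$3 \<noteq> 0" using ne unfolding u_def .
  obtain z where zW: "z \<in> Wa a" and Qz: "Qform z = 0" and zu: "dotf u z \<noteq> 0"
    using ovoid_point[OF c2 ella une] by blast
  define y where "y = v5 (z$1) (z$0) (z$3) (z$2) (0::'a)"
  have hy1: "Bf a y = z$4" using zW unfolding y_def Wa_def dotf_def Bf_def by (simp add: algebra_simps)
  have hy2: "qf y = Bf a y * Bf a y"
  proof -
    have "qf y = - (z$4 * z$4)" using Qz unfolding y_def qf_def Qform_def by (simp add: algebra_simps eq_neg_iff_add_eq_0)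
    then show ?thesis using hy1 c2_neg[OF c2] by simp
  qed
  have hy3: "Bf u y = dotf u z" unfolding y_def Bf_def dotf_def by (simp add: algebra_simps)
  define beta where "beta = Bf a b"
  define kappa where "kappa = qf u + beta * beta"
  have qu: "qf u = qf a + qf b + beta" unfolding u_def beta_def by (rule qf_add)
  have kH: "kappa \<in> HH"
  proof -
    have "kappa = (qf a + qf b) + (beta * beta + beta)" unfolding kappa_def qu by (simp add: algebra_simps)
    then show ?thesis using HH_add[OF c2 HH_index2[OF c2 fin qa qb] HH_sq] by simp
  qed
  obtain t where t: "kappa = t * t + t" using kH unfolding HH_def by blast
  define mu where "mu = (if t = 0 then 1 else t)"
  have mu0: "mu \<noteq> 0" unfolding mu_def by simp
  have hmu: "mu * mu + mu = kappa" unfolding mu_def t using c2 by simp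
  define lam where "lam = mu / Bf u y"
  have lam0: "lam \<noteq> 0" unfolding lam_def using mu0 zu hy3 by simp
  define d where "d = lam *s y"
  define r where "r = Bf a d"
  have hr: "r = lam * Bf a y" unfolding r_def d_def by (rule Bf_scale2)
  have qd: "qf d = r * r" unfolding d_def qf_scale hy2 hr by (simp add: algebra_simps)
  have Bud: "Bf u d = mu" unfolding d_def Bf_scale2 lam_def using zu hy3 by simp
  have dnz: "d$0 \<noteq> 0 \<or> d$1 \<noteq> 0 \<or> d$2 \<noteq> 0 \<or> d$3 \<noteq> 0"
  proof (rule ccontr)
    assume "\<not> ?thesis"
    then have "Bf u d = 0" unfolding Bf_def by simp
    then show False using Bud mu0 by simp
  qed
  define c where "c = a + d"
  have tan1: "section_points (Wa a) \<inter> section_points (Wa c) = {proj_pt (v5 (d$1) (d$0) (d$3) (d$2) (Bf a d))}"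
    unfolding c_def by (rule tangency[OF c2 ella dnz]) (simp add: qd r_def)
  define e where "e = u + d"
  have bb: "b + b = (0::'a^5)" using two by (simp add: vec_eq_iff)
  have ce: "c = b + e"
  proof -
    have "b + e = (a + d) + (b + b)" unfolding e_def u_def by (simp add: algebra_simps)
    then show ?thesis unfolding c_def bb by simp
  qed
  have Buu: "Bf u u = 0" unfolding Bf_self two by simp
  have Bue: "Bf u e = mu" unfolding e_def Bf_add2 Buu Bud by simp
  have enz: "e$0 \<noteq> 0 \<or> e$1 \<noteq> 0 \<or> e$2 \<noteq> 0 \<or> e$3 \<noteq> 0"
  proof (rule ccontr)
    assume "\<not> ?thesis"
    then have "Bf u e = 0" unfolding Bf_def by simp
    then show False using Bue mu0 by simp
  qed
  have tq2: "qf e = Bf b e * Bf b e"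
  proof -
    have q1: "qf e = qf u + r * r + mu" unfolding e_def qf_add qd Bud by simp
    have ba: "Bf b a = Bf a b" by (rule Bf_sym)
    have Bbu: "Bf b u = beta" unfolding u_def Bf_add2 ba beta_def Bf_self two by simp
    have Bbd: "Bf b d = mu - r"
    proof -
      have "Bf u d = Bf a d + Bf b d" unfolding u_def Bf_add1 ..
      then show ?thesis using Bud r_def by simp
    qed
    have Bbe: "Bf b e = beta + (mu - r)" unfolding e_def Bf_add2 Bbu Bbd by simp
    have quk: "qf u = mu * mu + mu - beta * beta" using hmu unfolding kappa_def by (simp add: algebra_simps)
    have "qf e - Bf b e * Bf b e = 2 * (mu - beta * beta - beta * mu + beta * r + mu * r)"
      unfolding q1 Bbe quk by (simp add: algebra_simps)
    then show ?thesis using two by simp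
  qed
  have tan2: "section_points (Wa b) \<inter> section_points (Wa c) = {proj_pt (v5 (e$1) (e$0) (e$3) (e$2) (Bf b e))}"
    unfolding ce by (rule tangency[OF c2 ellb enz tq2])
  have qc: "qf c \<notin> HH"
  proof
    assume "qf c \<in> HH"
    then have "qf c + (r * r + r) \<in> HH" using HH_add[OF c2 _ HH_sq] by blast
    moreover have "qf c + (r * r + r) = qf a + 2 * (r * r + r)"
      unfolding c_def qf_add qd r_def[symmetric] by (simp add: algebra_simps)
    ultimately show False using qa two by simp
  qed
  show ?thesis using qc tan1 tan2 by (intro exI[of _ c]) simp
qed

lemma dist_le: assumes "is_walk V E p" "hd p = x" "last p = y"
  shows "graph_dist V E x y \<le> enat (length p - 1)"
  unfolding graph_dist_def using assms by (intro INF_lower) simp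

lemma dist_ge2: assumes "x \<noteq> y" "\<not> E x y"
  shows "graph_dist V E x y \<ge> 2"
  unfolding graph_dist_def
proof (rule INF_greatest)
  fix p assume "p \<in> {p. is_walk V E p \<and> hd p = x \<and> last p = y}"
  then have w: "is_walk V E p" "hd p = x" "last p = y" by auto
  have ne: "p \<noteq> []" using w(1) unfolding is_walk_def by simp
  have "length p \<noteq> 1"
  proof
    assume "length p = 1"
    then obtain z where "p = [z]" by (metis One_nat_def length_0_conv length_Suc_conv)
    then show False using w assms by simp
  qed
  moreover have "length p \<noteq> 2"
  proof
    assume l2: "length p = 2"
    then obtain z1 z2 where p: "p = [z1, z2]"
      by (metis One_nat_def Suc_1 length_0_conv length_Suc_conv)
    have "E (p ! 0) (p ! Suc 0)" using w(1) l2 unfolding is_walk_def by simp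
    then show False using p w assms by simp
  qed
  moreover have "length p \<noteq> 0" using ne by simp
  ultimately have "length p - 1 \<ge> 2" by linarith
  then show "2 \<le> enat (length p - 1)" by (simp add: numeral_eq_enat)
qed

lemma ovoid_char:
  assumes c2: "(1::'a::field) + 1 = 0" and fin: "finite (UNIV::'a set)"
  shows "elliptic_ovoid (X :: ('a^5) set set) \<longleftrightarrow> (\<exists>a. qf a \<notin> HH \<and> X = section_points (Wa a))"
proof
  assume "elliptic_ovoid X"
  then obtain W where W: "elliptic_section W" "X = section_points W" unfolding elliptic_ovoid_def by blast
  obtain a where a: "W = Wa a" using fwd[OF c2 fin W(1)] by blast
  have "qf a \<notin> HH" using fwd_qf[OF c2] W(1) a by simp
  then show "\<exists>a. qf a \<notin> HH \<and> X = section_points (Wa a)" using W a by blast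
next
  assume "\<exists>a. qf a \<notin> HH \<and> X = section_points (Wa a)"
  then obtain a where "qf a \<notin> HH" "X = section_points (Wa a)" by blast
  then show "elliptic_ovoid X" unfolding elliptic_ovoid_def using converse[OF c2] by blast
qed

lemma ovoid_card:
  assumes c2: "(1::'a::field) + 1 = 0" and fin: "finite (UNIV::'a set)"
    and X: "elliptic_ovoid (X :: ('a^5) set set)"
  shows "card X \<noteq> 1"
proof -
  obtain W where W: "elliptic_section W" "X = section_points W" using X unfolding elliptic_ovoid_def by blast
  obtain P1 P2 where "P1 \<in> X" "P2 \<in> X" "P1 \<noteq> P2" using ell_two_points[OF c2 W(1)] W(2) by blast
  then show ?thesis by (rule card_not1)
qed

lemma Wa_eq: assumes "a$0 = b$0" "a$1 = b$1" "a$2 = b$2" "a$3 = b$3" shows "Wa a = Wa b"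
  unfolding Wa_def dotf_def using assms by simp

lemma upper:
  assumes c2: "(1::'a::field) + 1 = 0" and fin: "finite (UNIV::'a set)"
    and X: "elliptic_ovoid (X :: ('a^5) set set)" and Y: "elliptic_ovoid Y"
  shows "graph_dist {X. elliptic_ovoid X} Gamma_adj X Y \<le> 2"
proof (cases "X = Y")
  case True
  have "is_walk {X. elliptic_ovoid X} Gamma_adj [X]" unfolding is_walk_def using X by simp
  then have "graph_dist {X. elliptic_ovoid X} Gamma_adj X Y \<le> enat (length [X] - 1)"
    using dist_le True by fastforce
  then show ?thesis by (simp add: zero_enat_def[symmetric])
next
  case False
  obtain a where a: "qf a \<notin> HH" "X = section_points (Wa a)" using X ovoid_char[OF c2 fin] by blast
  obtain b where b: "qf b \<notin> HH" "Y = section_points (Wa b)" using Y ovoid_char[OF c2 fin] by blast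
  have ne: "(a + b)$0 \<noteq> 0 \<or> (a + b)$1 \<noteq> 0 \<or> (a + b)$2 \<noteq> 0 \<or> (a + b)$3 \<noteq> 0"
  proof (rule ccontr)
    assume "\<not> ?thesis"
    then have "a$0 + b$0 = 0" "a$1 + b$1 = 0" "a$2 + b$2 = 0" "a$3 + b$3 = 0" by auto
    then have "b$0 = a$0" "b$1 = a$1" "b$2 = a$2" "b$3 = a$3" using c2_eq[OF c2] by blast+
    then have "Wa a = Wa b" by (intro Wa_eq) simp_all
    then show False using False a b by simp
  qed
  obtain c where c: "qf c \<notin> HH" "card (section_points (Wa a) \<inter> section_points (Wa c)) = 1"
    "card (section_points (Wa b) \<inter> section_points (Wa c)) = 1"
    using common_nb[OF c2 fin a(1) b(1) ne] by blast
  define Z where "Z = section_points (Wa c)"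
  have Z: "elliptic_ovoid Z" unfolding Z_def using ovoid_char[OF c2 fin] c(1) by blast
  have XZ: "card (X \<inter> Z) = 1" using c(2) a(2) Z_def by simp
  have YZ: "card (Z \<inter> Y) = 1" using c(3) b(2) Z_def by (simp add: Int_commute)
  have nXZ: "X \<noteq> Z" using XZ ovoid_card[OF c2 fin X] by auto
  have nZY: "Z \<noteq> Y" using YZ ovoid_card[OF c2 fin Y] by auto
  have adj1: "Gamma_adj X Z" unfolding Gamma_adj_def using X Z nXZ XZ by simp
  have adj2: "Gamma_adj Z Y" unfolding Gamma_adj_def using Y Z nZY YZ by simp
  have wk: "is_walk {X. elliptic_ovoid X} Gamma_adj [X, Z, Y]"
    unfolding is_walk_def
  proof (intro conjI allI impI)
    show "[X, Z, Y] \<noteq> []" by simp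
    show "set [X, Z, Y] \<subseteq> {X. elliptic_ovoid X}" using X Y Z by simp
    fix i assume "Suc i < length [X, Z, Y]"
    then have "i = 0 \<or> i = 1" by auto
    then show "Gamma_adj ([X, Z, Y] ! i) ([X, Z, Y] ! Suc i)" using adj1 adj2 by auto
  qed
  have "graph_dist {X. elliptic_ovoid X} Gamma_adj X Y \<le> enat (length [X, Z, Y] - 1)"
    by (rule dist_le[OF wk]) simp_all
  then show ?thesis by (simp add: numeral_eq_enat numeral_2_eq_2)
qed

lemma lower:
  assumes c2: "(1::'a::field) + 1 = 0" and fin: "finite (UNIV::'a set)"
    and t: "(t::'a) \<noteq> 0" "t \<noteq> 1"
  shows "\<exists>X Y. elliptic_ovoid (X :: ('a^5) set set) \<and> elliptic_ovoid Y \<and> X \<noteq> Y \<and> \<not> Gamma_adj X Y"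
proof -
  obtain al :: 'a where al: "al \<notin> HH" using HH_notall[OF c2 fin] by blast
  define a :: "'a^5" where "a = v5 al 1 0 0 0"
  define c :: "'a^5" where "c = v5 (al * t) (1 / t) 0 0 0"
  have qa: "qf a = al" unfolding a_def qf_def by simp
  have qc: "qf c = al" unfolding c_def qf_def using t by simp
  define X where "X = section_points (Wa a)"
  define Y where "Y = section_points (Wa c)"
  have X: "elliptic_ovoid X" unfolding X_def using ovoid_char[OF c2 fin] qa al by blast
  have Y: "elliptic_ovoid Y" unfolding Y_def using ovoid_char[OF c2 fin] qc al by blast
  have p1X: "proj_pt (v5 0 0 1 0 0) \<in> X" unfolding X_def section_points_def a_def
    by (intro CollectI exI[of _ "v5 0 0 1 0 0"]) (simp add: vec5_eq)
  have p2X: "proj_pt (v5 0 0 0 1 0) \<in> X" unfolding X_def section_points_def a_def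
    by (intro CollectI exI[of _ "v5 0 0 0 1 0"]) (simp add: vec5_eq)
  have p1Y: "proj_pt (v5 0 0 1 0 0) \<in> Y" unfolding Y_def section_points_def c_def
    by (intro CollectI exI[of _ "v5 0 0 1 0 0"]) (simp add: vec5_eq)
  have p2Y: "proj_pt (v5 0 0 0 1 0) \<in> Y" unfolding Y_def section_points_def c_def
    by (intro CollectI exI[of _ "v5 0 0 0 1 0"]) (simp add: vec5_eq)
  have p12: "proj_pt (v5 0 0 1 0 0) \<noteq> proj_pt (v5 0 0 0 1 (0::'a))"
  proof
    assume "proj_pt (v5 0 0 1 0 0) = proj_pt (v5 0 0 0 1 (0::'a))"
    then obtain k where "v5 0 0 1 0 0 = k *s v5 0 0 0 1 (0::'a)" using pp_eq by blast
    then show False by (simp add: vec5_eq)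
  qed
  have nadj: "card (X \<inter> Y) \<noteq> 1" using card_not1[of _ "X \<inter> Y"] p1X p2X p1Y p2Y p12 by blast
  have rX: "proj_pt (v5 0 1 1 1 1) \<in> X" unfolding X_def section_points_def a_def
    by (intro CollectI exI[of _ "v5 0 1 1 1 1"]) (simp add: vec5_eq c2_two[OF c2])
  have rY: "proj_pt (v5 0 1 1 1 1) \<notin> Y"
  proof
    assume "proj_pt (v5 0 1 1 1 1) \<in> Y"
    then obtain w where w: "proj_pt (v5 0 1 1 1 1) = proj_pt w" "w \<in> Wa c" unfolding Y_def section_points_def by blast
    obtain k where "v5 0 1 1 1 1 = k *s w" using pp_eq[OF w(1)] by blast
    then have "v5 0 1 1 1 (1::'a) \<in> Wa c" using Wa_scale[OF w(2)] by simp
    then have "1 = 1 / t" unfolding c_def by simp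
    then show False using t by (simp add: field_simps)
  qed
  have "X \<noteq> Y" using rX rY by blast
  moreover have "\<not> Gamma_adj X Y" unfolding Gamma_adj_def using nadj by blast
  ultimately show ?thesis using X Y by blast
qed

theorem mainTheorem3:
  fixes n :: nat
  assumes "CARD('a::field) = 2 ^ n"
    and "(2::nat) ^ n > 2"
  shows "graph_diameter {X :: ('a ^ 5) set set. elliptic_ovoid X} Gamma_adj = 2"
proof -
  have c2: "(1::'a) + 1 = 0" by (rule char2[OF assms])
  have fin: "finite (UNIV::'a set)" by (rule finUNIV[OF assms(1)])
  obtain t :: 'a where t: "t \<noteq> 0" "t \<noteq> 1" using three_elems[OF assms] by blast
  let ?V = "{X :: ('a ^ 5) set set. elliptic_ovoid X}"
  have le: "graph_diameter ?V Gamma_adj \<le> 2"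
    unfolding graph_diameter_def
    by (intro SUP_least) (use upper[OF c2 fin] in simp)
  obtain X Y where XY: "elliptic_ovoid (X :: ('a^5) set set)" "elliptic_ovoid Y" "X \<noteq> Y" "\<not> Gamma_adj X Y"
    using lower[OF c2 fin t] by blast
  have "2 \<le> graph_dist ?V Gamma_adj X Y" by (rule dist_ge2[OF XY(3)]) (rule XY(4))
  also have "\<dots> \<le> (SUP y\<in>?V. graph_dist ?V Gamma_adj X y)" by (rule SUP_upper) (use XY in simp)
  also have "\<dots> \<le> graph_diameter ?V Gamma_adj" unfolding graph_diameter_def
    by (rule SUP_upper) (use XY in simp)
  finally show ?thesis using le by simp
qed

end
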